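(* Let $\mathbb{F}_2$ be the free group on $a,b$ with word length $\ell$ with respect to $\{a^{\pm1},b^{\pm1}\}$, and let $\alpha(n):=\min\{\ell(w)\mid w\in\gamma_n(\mathbb{F}_2)\setminus\{e\}\}$ and $\alpha:=\lim_{n\to\infty}\frac{\log_2(\alpha(n))}{\log_2(n)}$. There is a constant $C''>0$ such that $\alpha(n)\le C''\cdot n^{\log_\varphi(2)}$ for infinitely many $n\in\mathbb{N}$; consequently $\alpha\le\log_\varphi(2)$, where $\varphi$ is the golden ratio.
   Context: $\gamma_n(\mathbb{F}_2)$ denotes the $n$-th term of the lower central series: $\gamma_1(\mathbb{F}_2)=\mathbb{F}_2$, $\gamma_{n+1}(\mathbb{F}_2)=[\gamma_n(\mathbb{F}_2),\mathbb{F}_2]$. The limit defining $\alpha$ is known to exist. *)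

theory Defs
  imports Complex_Main
begin

text \<open>The free group F_2 on generators a, b, realised as freely reduced words.
  A letter is a pair (g, i): g = False means a, g = True means b;
  i = True means the inverse letter.\<close>

type_synonym letter = "bool \<times> bool"

definition inv_letter :: "letter \<Rightarrow> letter" where
  "inv_letter x = (fst x, \<not> snd x)"

fun red :: "letter list \<Rightarrow> letter list" where
  "red [] = []"
| "red (x # xs) = (case red xs of [] \<Rightarrow> [x]
                   | y # ys \<Rightarrow> (if y = inv_letter x then ys else x # y # ys))"

definition F2 :: "letter list set" where
  "F2 = {w. red w = w}"

definition fmul :: "letter list \<Rightarrow> letter list \<Rightarrow> letter list" where
  "fmul x y = red (x @ y)"

definition finv :: "letter list \<Rightarrow> letter list" where
  "finv x = rev (map inv_letter x)"

definition wlen :: "letter list \<Rightarrow> nat" where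
  "wlen w = length (red w)"

definition fcomm :: "letter list \<Rightarrow> letter list \<Rightarrow> letter list" where
  "fcomm x y = fmul (fmul (finv x) (finv y)) (fmul x y)"

inductive_set fgen :: "letter list set \<Rightarrow> letter list set" for S where
  fgen_one: "[] \<in> fgen S"
| fgen_base: "s \<in> S \<Longrightarrow> s \<in> fgen S"
| fgen_mul: "x \<in> fgen S \<Longrightarrow> y \<in> fgen S \<Longrightarrow> fmul x y \<in> fgen S"
| fgen_inv: "x \<in> fgen S \<Longrightarrow> finv x \<in> fgen S"

text \<open>Lower central series: lcs 1 = F_2, lcs (n+1) = [lcs n, F_2].
  (lcs 0 is set to F_2 by convention; it is never used.)\<close>
fun lcs :: "nat \<Rightarrow> letter list set" where
  "lcs 0 = F2"
| "lcs (Suc 0) = F2"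
| "lcs (Suc (Suc n)) = fgen {fcomm x y | x y. x \<in> lcs (Suc n) \<and> y \<in> F2}"

definition alpha_fun :: "nat \<Rightarrow> nat" where
  "alpha_fun n = (LEAST k. \<exists>w \<in> lcs n. w \<noteq> [] \<and> wlen w = k)"

definition golden_ratio :: real where
  "golden_ratio = (1 + sqrt 5) / 2"

end

theory Submission
  imports Defs "HOL-Algebra.Group"
begin

section \<open>Free reduction\<close>

definition push :: "letter \<Rightarrow> letter list \<Rightarrow> letter list" where
  "push x w = (case w of [] \<Rightarrow> [x] | y # ys \<Rightarrow> (if y = inv_letter x then ys else x # y # ys))"

lemma red_Cons': "red (x # xs) = push x (red xs)"
  by (simp add: push_def)

declare red.simps(2)[simp del]

lemma inv_letter_inv[simp]: "inv_letter (inv_letter x) = x"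
  by (simp add: inv_letter_def)

lemma inv_letter_neq[simp]: "inv_letter x \<noteq> x"
  by (cases x) (simp add: inv_letter_def)

lemma inv_letter_eq_iff: "(inv_letter x = y) = (x = inv_letter y)"
  by (auto simp: inv_letter_def)

fun rd :: "letter list \<Rightarrow> bool" where
  "rd [] = True"
| "rd [x] = True"
| "rd (x # y # ys) = (y \<noteq> inv_letter x \<and> rd (y # ys))"

lemma rd_tl: "rd (x # xs) \<Longrightarrow> rd xs"
  by (cases xs) auto

lemma rd_push: "rd w \<Longrightarrow> rd (push x w)"
  by (cases w) (auto simp: push_def dest: rd_tl)

lemma rd_red: "rd (red w)"
  by (induction w) (auto simp: red_Cons' rd_push)

lemma red_rd: "rd w \<Longrightarrow> red w = w"
proof (induction w)
  case Nil then show ?case by simp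
next
  case (Cons x xs)
  then have "red xs = xs" using rd_tl by blast
  then show ?case using Cons.prems by (cases xs) (auto simp: red_Cons' push_def)
qed

lemma red_red[simp]: "red (red w) = red w"
  using red_rd rd_red by blast

lemma push_cancel: "rd w \<Longrightarrow> push x (push (inv_letter x) w) = w"
proof (cases w)
  case Nil then show ?thesis by (simp add: push_def)
next
  case (Cons y ys)
  assume r: "rd w"
  show ?thesis
  proof (cases "y = x")
    case True
    then show ?thesis using Cons r by (cases ys) (auto simp: push_def)
  next
    case False
    then show ?thesis using Cons by (auto simp: push_def)
  qed
qed

lemma red_append: "red (xs @ ys) = foldr push xs (red ys)"
  by (induction xs) (auto simp: red_Cons')

lemma rd_foldr: "rd v \<Longrightarrow> rd (foldr push w v)"
  by (induction w) (auto simp: rd_push)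

lemma push_foldr: "rd w \<Longrightarrow> rd v \<Longrightarrow> foldr push (push l w) v = push l (foldr push w v)"
proof (cases w)
  case Nil then show ?thesis by (simp add: push_def)
next
  case (Cons y ys)
  assume r: "rd w" "rd v"
  show ?thesis
  proof (cases "y = inv_letter l")
    case True
    have "push l (push (inv_letter l) (foldr push ys v)) = foldr push ys v"
      by (rule push_cancel[OF rd_foldr[OF r(2)]])
    then show ?thesis using Cons True by (simp add: push_def)
  next
    case False
    then show ?thesis using Cons by (simp add: push_def)
  qed
qed

lemma act_red: "rd v \<Longrightarrow> foldr push (red x) v = foldr push x v"
  by (induction x) (auto simp: red_Cons' push_foldr rd_red)

lemma red_left[simp]: "red (red x @ y) = red (x @ y)"
  by (simp add: red_append act_red rd_red)

lemma red_right[simp]: "red (x @ red y) = red (x @ y)"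
  by (simp add: red_append)

lemma red_mid: "red (x @ red y @ z) = red (x @ y @ z)"
  by (metis red_left red_right)

lemma finv_append[simp]: "finv (x @ y) = finv y @ finv x"
  by (simp add: finv_def)

lemma finv_finv[simp]: "finv (finv x) = x"
  by (simp add: finv_def rev_map comp_def)

lemma finv_Nil[simp]: "finv [] = []"
  by (simp add: finv_def)

lemma finv_Cons: "finv (l # x) = finv x @ [inv_letter l]"
  by (simp add: finv_def)

lemma red_finv_left: "red (finv x @ x) = []"
proof (induction x)
  case Nil then show ?case by simp
next
  case (Cons l x)
  have "red (inv_letter l # l # x) = red x"
    using push_cancel[of "red x" "inv_letter l"] by (simp add: red_Cons' rd_red)
  then have "red (finv (l # x) @ l # x) = red (finv x @ x)"
    by (simp add: finv_Cons red_append)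
  then show ?case using Cons by simp
qed

lemma red_finv_right: "red (x @ finv x) = []"
  using red_finv_left[of "finv x"] by simp

lemma red_cancel_left: "red (p @ finv q @ q @ r) = red (p @ r)"
  by (metis append_Nil red_finv_left red_left red_mid append_assoc)

lemma red_cancel_right: "red (p @ q @ finv q @ r) = red (p @ r)"
  using red_cancel_left[of p "finv q" r] by simp

lemma red_length: "length (red w) \<le> length w"
proof (induction w)
  case (Cons x xs)
  have "length (push x v) \<le> Suc (length v)" for v
    by (cases v) (auto simp: push_def)
  then show ?case using Cons by (simp add: red_Cons') (meson Suc_le_mono le_trans)
qed simp

lemma finv_red_left: "red (finv (red x) @ y) = red (finv x @ y)"
proof -
  have "red (finv (red x) @ y) = red (finv (red x) @ red (x @ finv x) @ y)"
    by (simp add: red_finv_right)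
  also have "\<dots> = red (finv (red x) @ red x @ finv x @ y)"
    by (simp add: red_mid)
  also have "\<dots> = red (finv x @ y)"
    using red_cancel_left[of "[]" "red x" "finv x @ y"] by simp
  finally show ?thesis .
qed


lemma red_finv_mid: "red (p @ finv (red x) @ y) = red (p @ finv x @ y)"
  by (metis finv_red_left red_right)

lemma rd_append: "rd (xs @ ys) \<longleftrightarrow> rd xs \<and> rd ys \<and> (xs \<noteq> [] \<and> ys \<noteq> [] \<longrightarrow> hd ys \<noteq> inv_letter (last xs))"
proof (induction xs rule: rd.induct)
  case 1 then show ?case by simp
next
  case (2 x) then show ?case by (cases ys) auto
next
  case (3 x y zs) then show ?case by auto
qed

lemma rd_finv: "rd x \<Longrightarrow> rd (finv x)"
proof (induction x)
  case (Cons l x)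
  then have rx: "rd x" using rd_tl by blast
  show ?case
  proof (cases x)
    case Nil then show ?thesis by (simp add: finv_def)
  next
    case (Cons y ys)
    have h: "y \<noteq> inv_letter l" using Cons.prems \<open>x = y # ys\<close> by simp
    have "last (finv x) = inv_letter y" using \<open>x = y # ys\<close> by (simp add: finv_def)
    then have "hd [inv_letter l] \<noteq> inv_letter (last (finv x))" using h by auto
    then show ?thesis using Cons.IH[OF rx] by (simp add: finv_Cons rd_append)
  qed
qed simp

lemma F2_iff: "x \<in> F2 \<longleftrightarrow> rd x"
  using rd_red[of x] red_rd[of x] by (auto simp: F2_def)

lemma red_F2[simp]: "red x \<in> F2"
  by (simp add: F2_iff rd_red)

lemma F2_red: "x \<in> F2 \<Longrightarrow> red x = x"
  by (simp add: F2_def)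

lemma finv_F2: "x \<in> F2 \<Longrightarrow> finv x \<in> F2"
  by (simp add: F2_iff rd_finv)

definition G :: "letter list monoid" where
  "G = \<lparr>carrier = F2, mult = fmul, one = []\<rparr>"

lemma G_simps[simp]: "carrier G = F2" "one G = []"
  by (simp_all add: G_def)

lemma G_mult: "mult G = fmul"
  by (simp add: G_def)

lemma group_G: "group G"
proof (rule groupI, simp_all only: G_mult)
  fix x y z assume "x \<in> carrier G" "y \<in> carrier G" "z \<in> carrier G"
  show "fmul (fmul x y) z = fmul x (fmul y z)"
    by (simp add: fmul_def red_mid)
next
  fix x y assume "x \<in> carrier G" "y \<in> carrier G"
  then show "fmul x y \<in> carrier G" by (simp add: fmul_def)
next
  show "\<one>\<^bsub>G\<^esub> \<in> carrier G" by (simp add: F2_def)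
next
  fix x assume "x \<in> carrier G"
  then show "fmul \<one>\<^bsub>G\<^esub> x = x" by (simp add: fmul_def F2_def)
next
  fix x assume "x \<in> carrier G"
  then show "\<exists>y\<in>carrier G. fmul y x = \<one>\<^bsub>G\<^esub>"
    by (intro bexI[of _ "finv x"]) (auto simp: fmul_def red_finv_left finv_F2)
qed

interpretation FG: group G by (rule group_G)

abbreviation gm (infixl "\<cdot>" 70) where "x \<cdot> y \<equiv> x \<otimes>\<^bsub>G\<^esub> y"
abbreviation gi where "gi x \<equiv> inv\<^bsub>G\<^esub> x"

lemma gi_eq: "x \<in> F2 \<Longrightarrow> gi x = finv x"
  by (rule FG.inv_equality) (auto simp: G_mult fmul_def red_finv_left finv_F2)

lemma gm_eq: "x \<cdot> y = fmul x y" by (simp add: G_mult)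

lemma fcomm_eq: "x \<in> F2 \<Longrightarrow> y \<in> F2 \<Longrightarrow> fcomm x y = gi x \<cdot> gi y \<cdot> (x \<cdot> y)"
  by (simp add: gi_eq fcomm_def gm_eq)

lemma fcomm_F2[simp]: "fcomm x y \<in> F2"
  by (simp add: fcomm_def fmul_def)

lemma fmul_F2[simp]: "fmul x y \<in> F2"
  by (simp add: fmul_def)

lemma gm_F2[simp]: "x \<cdot> y \<in> F2"
  by (simp add: gm_eq)

lemma gi_F2[simp]: "x \<in> F2 \<Longrightarrow> gi x \<in> F2"
  by (simp add: gi_eq finv_F2)

lemma cancel1: "x \<in> F2 \<Longrightarrow> y \<in> F2 \<Longrightarrow> x \<cdot> (gi x \<cdot> y) = y"
  by (metis FG.inv_closed FG.m_assoc FG.r_inv FG.l_one G_simps(1))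
lemma cancel2: "x \<in> F2 \<Longrightarrow> y \<in> F2 \<Longrightarrow> gi x \<cdot> (x \<cdot> y) = y"
  by (metis FG.inv_closed FG.m_assoc FG.l_inv FG.l_one G_simps(1))

lemma nil_F2[simp]: "[] \<in> F2"
  by (simp add: F2_def)

lemma gi_nil[simp]: "gi [] = []"
  by (simp add: gi_eq F2_def)
lemma gm_nil1: "x \<in> F2 \<Longrightarrow> x \<cdot> [] = x"
  by (simp add: gm_eq fmul_def F2_red)
lemma gm_nil2: "x \<in> F2 \<Longrightarrow> [] \<cdot> x = x"
  by (simp add: gm_eq fmul_def F2_red)

lemmas gsimps = gm_nil1 gm_nil2 FG.m_assoc FG.inv_mult_group FG.inv_inv cancel1 cancel2 FG.r_inv FG.l_inv
  FG.r_one FG.l_one FG.m_closed FG.inv_closed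

section \<open>Lower central series\<close>

lemma fgen_F2: "x \<in> fgen S \<Longrightarrow> S \<subseteq> F2 \<Longrightarrow> x \<in> F2"
  by (induction rule: fgen.induct) (auto simp: finv_F2)

lemma fgen_mono: "x \<in> fgen S \<Longrightarrow> S \<subseteq> T \<Longrightarrow> x \<in> fgen T"
  by (induction rule: fgen.induct) (auto intro: fgen.intros)

lemma lcs_F2: "x \<in> lcs n \<Longrightarrow> x \<in> F2"
proof (induction n rule: lcs.induct)
  case (3 n)
  then have "x \<in> fgen {fcomm x y | x y. x \<in> lcs (Suc n) \<and> y \<in> F2}" by simp
  then show ?case by (rule fgen_F2) auto
qed auto

lemma lcs_one: "[] \<in> lcs n"
  by (cases n rule: lcs.cases) (auto simp: F2_def intro: fgen.intros)

lemma lcs_mul: "x \<in> lcs n \<Longrightarrow> y \<in> lcs n \<Longrightarrow> x \<cdot> y \<in> lcs n"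
  by (cases n rule: lcs.cases) (auto simp: gm_eq intro: fgen.intros)

lemma lcs_inv: "x \<in> lcs n \<Longrightarrow> gi x \<in> lcs n"
  using lcs_F2[of x n] by (cases n rule: lcs.cases) (auto simp: gi_eq finv_F2 intro: fgen.intros)

lemma comm_mem: "x \<in> lcs n \<Longrightarrow> y \<in> F2 \<Longrightarrow> fcomm x y \<in> lcs (Suc n)"
  by (cases n) (auto intro: fgen.intros)

lemma lcs_dec: "lcs (Suc n) \<subseteq> lcs n"
proof (induction n)
  case 0 then show ?case by simp
next
  case (Suc n)
  show ?case
  proof (cases n)
    case 0
    have "lcs (Suc (Suc 0)) \<subseteq> F2" using lcs_F2 by blast
    then show ?thesis using 0 by simp
  next
    case (Suc m)
    show ?thesis unfolding Suc
    proof
      fix x assume "x \<in> lcs (Suc (Suc (Suc m)))"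
      then have "x \<in> fgen {fcomm x y | x y. x \<in> lcs (Suc (Suc m)) \<and> y \<in> F2}" by simp
      then have "x \<in> fgen {fcomm x y | x y. x \<in> lcs (Suc m) \<and> y \<in> F2}"
        by (rule fgen_mono) (use Suc.IH \<open>n = Suc m\<close> in auto)
      then show "x \<in> lcs (Suc (Suc m))" by simp
    qed
  qed
qed

lemma lcs_normal: "x \<in> lcs n \<Longrightarrow> g \<in> F2 \<Longrightarrow> gi g \<cdot> x \<cdot> g \<in> lcs n"
proof -
  assume x: "x \<in> lcs n" and g: "g \<in> F2"
  have xF: "x \<in> F2" using x lcs_F2 by blast
  have "fcomm x g \<in> lcs n" using comm_mem[OF x g] lcs_dec by blast
  then have "x \<cdot> fcomm x g \<in> lcs n" using x lcs_mul by blast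
  also have "x \<cdot> fcomm x g = gi g \<cdot> x \<cdot> g"
    using xF g by (simp add: fcomm_eq gsimps)
  finally show ?thesis .
qed

lemma fgen_comm_F2: "y \<in> fgen {fcomm z w | z w. z \<in> T \<and> w \<in> F2} \<Longrightarrow> y \<in> F2"
  by (erule fgen_F2) auto

lemma comm_gen:
  assumes base: "\<And>x z w. x \<in> lcs i \<Longrightarrow> z \<in> T \<Longrightarrow> w \<in> F2 \<Longrightarrow> fcomm x (fcomm z w) \<in> lcs m"
  shows "y \<in> fgen {fcomm z w | z w. z \<in> T \<and> w \<in> F2} \<Longrightarrow> x \<in> lcs i \<Longrightarrow> fcomm x y \<in> lcs m"
proof (induction arbitrary: x rule: fgen.induct)
  case fgen_one
  then have "x \<in> F2" using lcs_F2 by blast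
  then have "fcomm x [] = []" by (simp add: fcomm_eq gsimps)
  then show ?case by (simp add: lcs_one)
next
  case (fgen_base s)
  then show ?case using base by blast
next
  case (fgen_mul g h)
  have xF: "x \<in> F2" using fgen_mul lcs_F2 by blast
  have gF: "g \<in> F2" and hF: "h \<in> F2" using fgen_mul fgen_comm_F2 by blast+
  have e: "fcomm x (fmul g h) = fcomm x h \<cdot> (gi h \<cdot> fcomm x g \<cdot> h)"
    using xF gF hF by (simp add: fcomm_eq gm_eq[symmetric] gsimps)
  have "gi h \<cdot> fcomm x g \<cdot> h \<in> lcs m"
    using lcs_normal[OF fgen_mul.IH(1)[OF fgen_mul.prems] hF] .
  then show ?case unfolding e using lcs_mul fgen_mul.IH(2)[OF fgen_mul.prems] by blast
next
  case (fgen_inv g)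
  have xF: "x \<in> F2" using fgen_inv lcs_F2 by blast
  have gF: "g \<in> F2" using fgen_inv fgen_comm_F2 by blast
  have x': "gi (gi g) \<cdot> x \<cdot> gi g \<in> lcs i" using lcs_normal[OF fgen_inv.prems gi_F2[OF gF]] .
  have e: "fcomm x (finv g) = gi (fcomm (gi (gi g) \<cdot> x \<cdot> gi g) g)"
    using xF gF by (simp add: fcomm_eq gi_eq[symmetric] gsimps)
  show ?case unfolding e using lcs_inv fgen_inv.IH[OF x'] by blast
qed

lemma comm_lcs: "x \<in> lcs i \<Longrightarrow> y \<in> lcs j \<Longrightarrow> fcomm x y \<in> lcs (i + j)"
proof (induction j arbitrary: i x y)
  case 0
  have xF: "x \<in> F2" and yF: "y \<in> F2" using 0 lcs_F2 by auto
  have e: "fcomm x y = gi x \<cdot> (gi y \<cdot> x \<cdot> y)"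
    using xF yF by (simp add: fcomm_eq gsimps)
  show ?case unfolding e using lcs_mul lcs_inv lcs_normal 0 yF by simp
next
  case (Suc j)
  show ?case
  proof (cases j)
    case 0 then show ?thesis using Suc.prems comm_mem lcs_F2 by simp
  next
    case (Suc j')
    have IH: "\<And>i x y. x \<in> lcs i \<Longrightarrow> y \<in> lcs (Suc j') \<Longrightarrow> fcomm x y \<in> lcs (i + Suc j')"
      using Suc.IH Suc by simp
    have y: "y \<in> fgen {fcomm z w | z w. z \<in> lcs (Suc j') \<and> w \<in> F2}"
      using Suc.prems(2) Suc by simp
    have "fcomm x y \<in> lcs (i + Suc (Suc j'))"
    proof (rule comm_gen[OF _ y Suc.prems(1)])
      fix x z w assume x: "x \<in> lcs i" and z: "z \<in> lcs (Suc j')" and w: "w \<in> F2"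
      have xF: "x \<in> F2" and zF: "z \<in> F2" using x z lcs_F2 by auto
      define Q0 where "Q0 = fcomm (gi x) (gi w)"
      define Q1 where "Q1 = fcomm (gi Q0) z"
      define Q where "Q = gi x \<cdot> Q1 \<cdot> x"
      define R0 where "R0 = fcomm x (gi z)"
      define R1 where "R1 = fcomm R0 (gi w)"
      define R where "R = gi z \<cdot> R1 \<cdot> z"
      have "Q0 \<in> lcs (Suc i)" unfolding Q0_def using comm_mem lcs_inv x w by simp
      then have "Q1 \<in> lcs (Suc i + Suc j')" unfolding Q1_def using IH lcs_inv z by blast
      then have "Q \<in> lcs (i + Suc (Suc j'))" unfolding Q_def using lcs_normal xF
        by (metis add_Suc add_Suc_right)
      moreover have "R0 \<in> lcs (i + Suc j')" unfolding R0_def using IH lcs_inv x z by blast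
      then have "R1 \<in> lcs (Suc (i + Suc j'))" unfolding R1_def using w by (intro comm_mem) auto
      then have "R1 \<in> lcs (i + Suc (Suc j'))" by (metis add_Suc_right)
      then have "R \<in> lcs (i + Suc (Suc j'))" unfolding R_def using lcs_normal zF by blast
      ultimately have QR: "gi w \<cdot> (Q \<cdot> R) \<cdot> w \<in> lcs (i + Suc (Suc j'))"
        using lcs_mul lcs_normal w by blast
      have "fcomm x (fcomm z w) = gi w \<cdot> (Q \<cdot> R) \<cdot> w"
        unfolding Q_def Q1_def Q0_def R_def R1_def R0_def
        using xF zF w by (simp add: fcomm_eq gsimps)
      then show "fcomm x (fcomm z w) \<in> lcs (i + Suc (Suc j'))" using QR by simp
    qed
    then show ?thesis using Suc by simp
  qed
qed

section \<open>The Fibonacci commutator sequence\<close>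

definition la :: letter where "la = (False, False)"
definition lb :: letter where "lb = (True, False)"

fun u :: "nat \<Rightarrow> letter list" where
  "u 0 = [la]"
| "u (Suc 0) = [lb]"
| "u (Suc (Suc k)) = fcomm (u (Suc k)) (u k)"

fun dg :: "nat \<Rightarrow> nat" where
  "dg 0 = 1"
| "dg (Suc 0) = 1"
| "dg (Suc (Suc k)) = dg (Suc k) + dg k"

lemma u_lcs: "u k \<in> lcs (dg k)"
proof (induction k rule: u.induct)
  case 1 then show ?case by (simp add: F2_iff)
next
  case 2 then show ?case by (simp add: F2_iff)
next
  case (3 k)
  then show ?case using comm_lcs by simp
qed

lemma u_F2: "u k \<in> F2"
  using u_lcs lcs_F2 by blast

lemma ev_app: "red (X @ Y) = red X \<cdot> red Y"
  by (simp add: gm_eq fmul_def)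

lemma red_finv: "red (finv X) = finv (red X)"
proof -
  have "finv (red X) = red (finv (red X))"
    using rd_finv[OF rd_red] red_rd by metis
  also have "\<dots> = red (finv X)" using finv_red_left[of X "[]"] by simp
  finally show ?thesis by simp
qed

lemma ev_finv: "red (finv X) = gi (red X)"
  by (simp add: red_finv gi_eq)

fun rep :: "nat \<Rightarrow> letter list \<times> letter list \<times> letter list" where
  "rep 0 = ([], [la], [lb, la])"
| "rep (Suc k) = (case rep k of (S, T, M) \<Rightarrow> (T @ finv M, S, finv T @ S @ M))"

lemma rep_u: "rep k = (S, T, M) \<Longrightarrow>
   u k = red T \<cdot> gi (red S) \<and> u (Suc k) = red S \<cdot> red M \<cdot> gi (red T)"
proof (induction k arbitrary: S T M)
  case 0
  then have e: "S = []" "T = [la]" "M = [lb, la]" by auto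
  have r1: "red [la] = [la]" "red [lb, la] = [lb, la]"
    by (simp_all add: red_Cons' push_def la_def lb_def inv_letter_def)
  have "red [lb, la] \<cdot> gi (red [la]) = red ([lb, la] @ finv [la])"
    by (simp only: ev_app ev_finv)
  also have "\<dots> = [lb]"
    by (simp add: red_Cons' push_def la_def lb_def inv_letter_def finv_def)
  finally have "red [lb, la] \<cdot> gi (red [la]) = [lb]" .
  moreover have F: "[la] \<in> F2" "[lb, la] \<in> F2" using r1 by (simp_all add: F2_def)
  ultimately show ?case using e r1 by (simp add: gsimps)
next
  case (Suc k)
  obtain S0 T0 M0 where r: "rep k = (S0, T0, M0)" by (cases "rep k") auto
  then have e: "S = T0 @ finv M0" "T = S0" "M = finv T0 @ S0 @ M0" using Suc.prems by auto
  have IH: "u k = red T0 \<cdot> gi (red S0)" "u (Suc k) = red S0 \<cdot> red M0 \<cdot> gi (red T0)"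
    using Suc.IH[OF r] by auto
  have F: "red S0 \<in> F2" "red T0 \<in> F2" "red M0 \<in> F2" by auto
  have "u (Suc k) = red T \<cdot> gi (red S)"
    unfolding IH e using F by (simp add: ev_app ev_finv gsimps)
  moreover have "u (Suc (Suc k)) = red S \<cdot> red M \<cdot> gi (red T)"
    unfolding e u.simps IH using F by (simp add: ev_app ev_finv fcomm_eq gsimps)
  ultimately show ?case by simp
qed

lemma rep_len: "rep k = (S, T, M) \<Longrightarrow> length S + length T + length M = 3 * 2 ^ k"
proof (induction k arbitrary: S T M)
  case (Suc k)
  obtain S0 T0 M0 where r: "rep k = (S0, T0, M0)" by (cases "rep k") auto
  then show ?case using Suc.prems Suc.IH[OF r] by (auto simp: finv_def)
qed auto

lemma wlen_u: "wlen (u k) \<le> 3 * 2 ^ k"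
proof (cases k)
  case 0 then show ?thesis by (simp add: wlen_def red_Cons' push_def)
next
  case (Suc j)
  obtain S T M where r: "rep j = (S, T, M)" by (cases "rep j") auto
  have "u (Suc j) = red (S @ M @ finv T)"
    using rep_u[OF r] by (simp add: ev_app ev_finv gsimps)
  then have "wlen (u (Suc j)) \<le> length (S @ M @ finv T)"
    using red_length[of "S @ M @ finv T"] by (simp add: wlen_def)
  also have "\<dots> = 3 * 2 ^ j" using rep_len[OF r] by (simp add: finv_def)
  finally show ?thesis using Suc by simp
qed

section \<open>Nontriviality via a homomorphism to A5\<close>

definition pl :: "nat list \<Rightarrow> nat \<Rightarrow> nat" where
  "pl p i = (if i < 5 then p ! i else i)"

definition htab :: "letter \<Rightarrow> nat list" where
  "htab l = (if fst l then (if snd l then [2,0,4,1,3] else [1,3,0,4,2])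
                      else (if snd l then [4,0,1,2,3] else [1,2,3,4,0]))"

definition hom :: "letter \<Rightarrow> nat \<Rightarrow> nat" where
  "hom l = pl (htab l)"

lemma less5: "(i::nat) < 5 \<longleftrightarrow> i = 0 \<or> i = 1 \<or> i = 2 \<or> i = 3 \<or> i = 4"
  by auto

lemma hom_inv: "hom (inv_letter l) \<circ> hom l = id"
proof
  fix i
  obtain g e where l: "l = (g, e)" by (cases l)
  show "(hom (inv_letter l) \<circ> hom l) i = id i"
  proof (cases "i < 5")
    case True
    then show ?thesis unfolding less5 l
      by (cases g; cases e) (auto simp: hom_def pl_def htab_def inv_letter_def)
  next
    case False
    then show ?thesis unfolding l
      by (cases g; cases e) (auto simp: hom_def pl_def htab_def inv_letter_def)
  qed
qed

lemma hom_inv': "hom l \<circ> hom (inv_letter l) = id"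
  using hom_inv[of "inv_letter l"] by simp

lemma hom_bdd: "i < 5 \<Longrightarrow> hom l i < 5"
  unfolding less5
  by (cases l; cases "fst l"; cases "snd l") (auto simp: hom_def pl_def htab_def)

definition hw :: "letter list \<Rightarrow> nat \<Rightarrow> nat" where
  "hw w = foldr (\<lambda>l f. hom l \<circ> f) w id"

lemma hw_app: "hw (x @ y) = hw x \<circ> hw y"
  by (induction x) (auto simp: hw_def)

lemma hw_Nil[simp]: "hw [] = id"
  by (simp add: hw_def)

lemma hw_Cons: "hw (l # x) = hom l \<circ> hw x"
  by (simp add: hw_def)

lemma hw_push: "hw (push l w) = hom l \<circ> hw w"
proof (cases w)
  case Nil then show ?thesis by (simp add: push_def hw_Cons)
next
  case (Cons y ys)
  show ?thesis
  proof (cases "y = inv_letter l")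
    case True
    have "hom l \<circ> hw w = (hom l \<circ> hom (inv_letter l)) \<circ> hw ys"
      using Cons True by (simp add: hw_Cons comp_assoc)
    then show ?thesis using Cons True by (simp add: push_def hom_inv')
  next
    case False
    then show ?thesis using Cons by (simp add: push_def hw_Cons)
  qed
qed

lemma hw_red: "hw (red w) = hw w"
  by (induction w) (auto simp: red_Cons' hw_push hw_Cons)

lemma hw_bdd: "i < 5 \<Longrightarrow> hw w i < 5"
  by (induction w arbitrary: i) (auto simp: hw_Cons hom_bdd)

definition tab :: "(nat \<Rightarrow> nat) \<Rightarrow> nat list" where
  "tab f = map f [0..<5]"

definition tc :: "nat list \<Rightarrow> nat list \<Rightarrow> nat list" where
  "tc p q = map (\<lambda>i. p ! (q ! i)) [0..<5]"

lemma tab_comp: "(\<And>i. i < 5 \<Longrightarrow> g i < 5) \<Longrightarrow> tab (f \<circ> g) = tc (tab f) (tab g)"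
  by (simp add: tab_def tc_def)

definition tstep :: "nat list \<times> nat list \<times> nat list \<times> nat list \<Rightarrow> nat list \<times> nat list \<times> nat list \<times> nat list" where
  "tstep t = (case t of (p, p2, q, q2) \<Rightarrow> (q, q2, tc q2 (tc p2 (tc q p)), tc p2 (tc q2 (tc p q))))"

fun tseq :: "nat \<Rightarrow> nat list \<times> nat list \<times> nat list \<times> nat list" where
  "tseq 0 = ([1,2,3,4,0], [4,0,1,2,3], [1,3,0,4,2], [2,0,4,1,3])"
| "tseq (Suc k) = tstep (tseq k)"

lemma hw_finv_red: "hw (finv (red W)) = hw (finv W)"
  by (simp add: red_finv[symmetric] hw_red)

lemma tab_hw_comp: "tab (hw x \<circ> hw y) = tc (tab (hw x)) (tab (hw y))"
  by (rule tab_comp) (rule hw_bdd)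

lemma tab_hw4: "tab (hw a \<circ> (hw b \<circ> (hw c \<circ> hw d))) =
   tc (tab (hw a)) (tc (tab (hw b)) (tc (tab (hw c)) (tab (hw d))))"
proof -
  have "tab (hw a \<circ> (hw b \<circ> (hw c \<circ> hw d))) = tc (tab (hw a)) (tab (hw b \<circ> (hw c \<circ> hw d)))"
    by (rule tab_comp) (simp add: hw_bdd)
  also have "tab (hw b \<circ> (hw c \<circ> hw d)) = tc (tab (hw b)) (tab (hw c \<circ> hw d))"
    by (rule tab_comp) (simp add: hw_bdd)
  also have "tab (hw c \<circ> hw d) = tc (tab (hw c)) (tab (hw d))"
    by (rule tab_comp) (simp add: hw_bdd)
  finally show ?thesis .
qed

lemma upt5: "[0..<5] = [0,1,2,3,4::nat]"
  by (simp add: upt_rec)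

lemma tseq_u: "tseq k = (tab (hw (u k)), tab (hw (finv (u k))), tab (hw (u (Suc k))), tab (hw (finv (u (Suc k)))))"
proof (induction k)
  case 0
  show ?case
    by (simp add: tab_def hw_def hom_def pl_def htab_def la_def lb_def finv_def inv_letter_def upt5)
next
  case (Suc k)
  have e: "u (Suc (Suc k)) = red (finv (u (Suc k)) @ finv (u k) @ u (Suc k) @ u k)"
    by (simp add: fcomm_def fmul_def)
  have h1: "hw (u (Suc (Suc k))) = hw (finv (u (Suc k))) \<circ> (hw (finv (u k)) \<circ> (hw (u (Suc k)) \<circ> hw (u k)))"
    unfolding e by (simp add: hw_red hw_app)
  have h2: "hw (finv (u (Suc (Suc k)))) = hw (finv (u k)) \<circ> (hw (finv (u (Suc k))) \<circ> (hw (u k) \<circ> hw (u (Suc k))))"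
    unfolding e hw_finv_red by (simp add: hw_app)
  show ?case using Suc.IH unfolding h1 h2
    by (simp only: tstep_def tab_hw4 prod.case tseq.simps)
qed

lemma tseq_period: "tseq (5 + k) = tseq k"
proof (induction k)
  case 0
  show ?case by (simp add: eval_nat_numeral tstep_def tc_def)
next
  case (Suc k) then show ?case by (metis add_Suc_right tseq.simps(2))
qed

lemma tseq_fst: "fst (tseq k) \<noteq> [0,1,2,3,4]"
proof (induction k rule: less_induct)
  case (less k)
  show ?case
  proof (cases "k < 5")
    case True
    then show ?thesis unfolding less5
      by (auto simp: eval_nat_numeral tstep_def tc_def)
  next
    case False
    then obtain j where "k = 5 + j" by (metis le_Suc_ex not_less)
    then show ?thesis using less.IH[of j] tseq_period by simp
  qed
qed

lemma u_nonempty: "u k \<noteq> []"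
proof
  assume "u k = []"
  then have "fst (tseq k) = tab id" using tseq_u[of k] by simp
  then show False using tseq_fst[of k] by (simp add: tab_def upt_conv_Cons)
qed

lemma alpha_le: "alpha_fun (dg k) \<le> 3 * 2 ^ k"
proof -
  have "alpha_fun (dg k) \<le> wlen (u k)"
    unfolding alpha_fun_def by (rule Least_le) (use u_lcs u_nonempty in blast)
  then show ?thesis using wlen_u[of k] by linarith
qed

lemma phi_gt1: "golden_ratio > 1"
proof -
  have "sqrt 5 > 1" by simp
  then show ?thesis by (simp add: golden_ratio_def)
qed

lemma phi_sq: "golden_ratio ^ 2 = golden_ratio + 1"
  by (simp add: golden_ratio_def power2_eq_square field_simps)

lemma dg_pos: "dg k \<ge> 1"
  by (induction k rule: dg.induct) auto

lemma dg_pos': "0 < dg k"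
  using dg_pos[of k] by linarith

lemma dg_ge: "golden_ratio ^ k \<le> golden_ratio * real (dg k)"
proof (induction k rule: dg.induct)
  case 1 then show ?case using phi_gt1 by simp
next
  case 2 then show ?case by simp
next
  case (3 k)
  have "golden_ratio ^ Suc (Suc k) = golden_ratio ^ k * golden_ratio ^ 2"
    by (simp add: power_add[symmetric])
  also have "\<dots> = golden_ratio ^ Suc k + golden_ratio ^ k"
    by (simp add: phi_sq algebra_simps)
  also have "\<dots> \<le> golden_ratio * real (dg (Suc k)) + golden_ratio * real (dg k)"
    using 3 by linarith
  finally show ?case by (simp add: algebra_simps)
qed

lemma dg_ge_k: "k \<le> dg k"
proof (induction k rule: dg.induct)
  case (3 k) then show ?case using dg_pos[of k] by simp
qed auto

lemma main_bound: "real (alpha_fun (dg k)) \<le> 6 * real (dg k) powr (log golden_ratio 2)"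
proof -
  define e where "e = log golden_ratio 2"
  have p1: "golden_ratio > 1" by (rule phi_gt1)
  have e0: "e \<ge> 0" unfolding e_def using p1 by simp
  have pe: "golden_ratio powr e = 2" unfolding e_def using p1 by simp
  have eqk: "(golden_ratio ^ k) powr e = 2 ^ k"
  proof -
    have "(golden_ratio ^ k) powr e = (golden_ratio powr real k) powr e"
      using p1 by (simp add: powr_realpow)
    also have "\<dots> = (golden_ratio powr e) powr real k"
      by (simp add: powr_powr mult.commute)
    also have "\<dots> = 2 ^ k" by (simp add: pe powr_realpow)
    finally show ?thesis .
  qed
  have "2 ^ k \<le> (golden_ratio * real (dg k)) powr e"
    unfolding eqk[symmetric] using dg_ge[of k] e0 p1 by (intro powr_mono2) auto
  also have "\<dots> = 2 * real (dg k) powr e"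
    using p1 pe by (simp add: powr_mult)
  finally have "2 ^ k \<le> 2 * real (dg k) powr e" .
  moreover have "real (alpha_fun (dg k)) \<le> 3 * 2 ^ k"
    using alpha_le[of k] by (metis of_nat_le_iff of_nat_mult of_nat_numeral of_nat_power)
  ultimately show ?thesis unfolding e_def by linarith
qed

lemma f_bound:
  assumes n: "n = dg k" "n \<ge> 2"
  shows "log 2 (real (alpha_fun n)) / log 2 (real n)
         \<le> log golden_ratio 2 + ln 6 / ln (real n)"
proof -
  define e where "e = log golden_ratio 2"
  have e0: "e \<ge> 0" unfolding e_def using phi_gt1 by simp
  have ln_pos: "ln (real n) > 0" using n by simp
  have l2: "log 2 (real n) > 0" using n by simp
  have l6: "ln 6 / ln (real n) \<ge> 0" using ln_pos by simp
  show ?thesis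
  proof (cases "alpha_fun n = 0")
    case True
    then show ?thesis using e0 l6 unfolding e_def by (simp add: log_def)
  next
    case False
    have a: "real (alpha_fun n) \<le> 6 * real n powr e"
      using main_bound[of k] n unfolding e_def by simp
    have "log 2 (real (alpha_fun n)) \<le> log 2 (6 * real n powr e)"
      using a False n by (subst log_le_cancel_iff) auto
    also have "\<dots> = log 2 6 + e * log 2 (real n)"
      using n by (simp add: log_mult log_powr)
    finally have "log 2 (real (alpha_fun n)) / log 2 (real n) \<le> (log 2 6 + e * log 2 (real n)) / log 2 (real n)"
      using l2 by (simp add: divide_right_mono)
    also have "\<dots> = e + log 2 6 / log 2 (real n)"
      using l2 by (simp add: field_simps)
    also have "log 2 6 / log 2 (real n) = ln 6 / ln (real n)"
      by (simp add: log_def)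
    finally show ?thesis unfolding e_def .
  qed
qed

theorem proposition2p6:
  shows "(\<exists>C > 0. \<exists>\<^sub>F n in sequentially.
            real (alpha_fun n) \<le> C * real n powr (log golden_ratio 2))
       \<and> (convergent (\<lambda>n. log 2 (real (alpha_fun n)) / log 2 (real n)) \<longrightarrow>
            lim (\<lambda>n. log 2 (real (alpha_fun n)) / log 2 (real n)) \<le> log golden_ratio 2)"
proof (intro conjI impI)
  show "\<exists>C > 0. \<exists>\<^sub>F n in sequentially.
            real (alpha_fun n) \<le> C * real n powr (log golden_ratio 2)"
  proof (intro exI[of _ 6] conjI)
    show "\<exists>\<^sub>F n in sequentially. real (alpha_fun n) \<le> 6 * real n powr (log golden_ratio 2)"
      unfolding frequently_sequentially
      using main_bound dg_ge_k by blast
  qed simp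
next
  define f where "f = (\<lambda>n. log 2 (real (alpha_fun n)) / log 2 (real n))"
  assume "convergent (\<lambda>n. log 2 (real (alpha_fun n)) / log 2 (real n))"
  then have "f \<longlonglongrightarrow> lim f" unfolding f_def by (simp add: convergent_LIMSEQ_iff)
  define g where "g = (\<lambda>k. dg (Suc (Suc k)))"
  have sm: "strict_mono g"
    unfolding g_def by (rule strict_mono_Suc_iff[THEN iffD2]) (use dg_pos' in auto)
  have g2: "g k \<ge> 2" for k unfolding g_def using dg_ge_k[of "Suc (Suc k)"] by simp
  have lim1: "(f \<circ> g) \<longlonglongrightarrow> lim f"
    using LIMSEQ_subseq_LIMSEQ[OF \<open>f \<longlonglongrightarrow> lim f\<close> sm] .
  have gtop: "filterlim (\<lambda>k. real (g k)) at_top sequentially"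
    using filterlim_compose[OF filterlim_real_sequentially filterlim_subseq[OF sm]] by (simp add: comp_def)
  have lntop: "filterlim (\<lambda>k. ln (real (g k))) at_top sequentially"
    using filterlim_compose[OF ln_at_top gtop] .
  have lim2: "(\<lambda>k. log golden_ratio 2 + ln 6 / ln (real (g k))) \<longlonglongrightarrow> log golden_ratio 2 + 0"
    by (intro tendsto_add tendsto_const tendsto_divide_0[OF tendsto_const]
        filterlim_at_top_imp_at_infinity[OF lntop])
  have le: "(f \<circ> g) k \<le> log golden_ratio 2 + ln 6 / ln (real (g k))" for k
    unfolding f_def comp_def g_def using f_bound[of "dg (Suc (Suc k))" "Suc (Suc k)"] g2[of k]
    unfolding g_def by simp
  have "lim f \<le> log golden_ratio 2 + 0"
    by (rule LIMSEQ_le[OF lim1 lim2]) (use le in auto)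
  then show "lim (\<lambda>n. log 2 (real (alpha_fun n)) / log 2 (real n)) \<le> log golden_ratio 2"
    unfolding f_def by simp
qed

end
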